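(* Let $f$ satisfy the $L$-descent condition for some $L>0$ and let $\{x^k\}$ be generated by Algorithm IRG with $\theta<\mu$, $\rho_k=\varepsilon_k$ for all $k$, and constant-type stepsizes (there exist $\delta\in(0,2)$ and $\delta'>0$ with $\delta'\le\frac{2-\delta}{L}$ and $t_k\in[\delta',\frac{2-\delta}{L}]$ for all $k$). Assume $\{x^k\}$ has an accumulation point $\bar x$ and $f$ satisfies the KL property at $\bar x$ with $\psi(t)=Mt^q$ for some $M>0$ and $q\in(0,1)$. Assume $\mathbb N\setminus\mathcal N$ is infinite, enumerate it increasingly as $j_1<j_2<\cdots$, and set $z^k:=x^{j_k}$. Then: (i) if $q\in(0,1/2]$, $\{z^k\}$ converges linearly to $\bar x$, i.e. there exist $C>0$ and $\lambda\in(0,1)$ with $\|z^k-\bar x\|\le C\lambda^k$ for all large $k$; (ii) if $q\in(1/2,1)$, there exists $\varrho>0$ with $\|z^k-\bar x\|\le\varrho k^{-\frac{1-q}{2q-1}}$ for all sufficiently large $k$.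
   Context: Algorithm IRG (general inexact reduced gradient framework). Let $f:\mathbb R^n\to\mathbb R$ be continuously differentiable. Parameters: initial point $x^1\in\mathbb R^n$, initial radii $\varepsilon_1>0$, $r_1>0$, reduction factors $\mu,\theta\in(0,1)$, and a sequence $\{\rho_k\}$ of positive numbers. For $k=1,2,\dots$: (1) choose $g^k\in\mathbb R^n$ with $\|g^k-\nabla f(x^k)\|\le\min\{\varepsilon_k,\rho_k\}$; (2) if $\|g^k\|\le r_k+\varepsilon_k$, set $r_{k+1}=\mu r_k$, $\varepsilon_{k+1}=\theta\varepsilon_k$, $d^k=0$; otherwise set $r_{k+1}=r_k$, $\varepsilon_{k+1}=\varepsilon_k$ and $d^k=-\frac{\|g^k\|-\varepsilon_k}{\|g^k\|}g^k$; (3) choose a stepsize $t_k>0$ by some rule; (4) set $x^{k+1}=x^k+t_kd^k$. The set of null iterations is $\mathcal N:=\{k\in\mathbb N: x^{k+1}=x^k\}$. $f$ satisfies the $L$-descent condition if $f(y)\le f(x)+\langle\nabla f(x),y-x\rangle+\frac L2\|y-x\|^2$ for all $x,y\in\mathbb R^n$. KL property with $\psi(t)=Mt^q$: there exist $\eta>0$ and a neighborhood $U$ of $\bar x$ such that $\|\nabla f(x)\|\ge M(f(x)-f(\bar x))^q$ for all $x\in U$ with $f(\bar x)<f(x)<f(\bar x)+\eta$. *)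

theory Defs
  imports "HOL-Analysis.Analysis" "HOL-Library.Infinite_Set"
begin

definition is_C1_with_gradient :: "('a::euclidean_space \<Rightarrow> real) \<Rightarrow> ('a \<Rightarrow> 'a) \<Rightarrow> bool" where
  "is_C1_with_gradient f grad \<longleftrightarrow>
     (\<forall>x. (f has_derivative (\<lambda>h. grad x \<bullet> h)) (at x)) \<and> continuous_on UNIV grad"

definition L_descent :: "('a::euclidean_space \<Rightarrow> real) \<Rightarrow> ('a \<Rightarrow> 'a) \<Rightarrow> real \<Rightarrow> bool" where
  "L_descent f grad L \<longleftrightarrow>
     (\<forall>x y. f y \<le> f x + grad x \<bullet> (y - x) + L / 2 * (norm (y - x))\<^sup>2)"

text \<open>Algorithm IRG, iterations indexed by k = 1, 2, ... (values at index 0 are irrelevant).\<close>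
definition IRG ::
  "('a::euclidean_space \<Rightarrow> real) \<Rightarrow> ('a \<Rightarrow> 'a) \<Rightarrow> real \<Rightarrow> real \<Rightarrow> (nat \<Rightarrow> real)
   \<Rightarrow> (nat \<Rightarrow> 'a) \<Rightarrow> (nat \<Rightarrow> 'a) \<Rightarrow> (nat \<Rightarrow> 'a) \<Rightarrow> (nat \<Rightarrow> real) \<Rightarrow> (nat \<Rightarrow> real)
   \<Rightarrow> (nat \<Rightarrow> real) \<Rightarrow> bool" where
  "IRG f grad \<mu> \<theta> \<rho> x g d \<epsilon> r t \<longleftrightarrow>
     \<epsilon> 1 > 0 \<and> r 1 > 0 \<and> 0 < \<mu> \<and> \<mu> < 1 \<and> 0 < \<theta> \<and> \<theta> < 1 \<and>
     (\<forall>k\<ge>1. \<rho> k > 0) \<and>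
     (\<forall>k\<ge>1. norm (g k - grad (x k)) \<le> min (\<epsilon> k) (\<rho> k)) \<and>
     (\<forall>k\<ge>1.
        (norm (g k) \<le> r k + \<epsilon> k \<longrightarrow>
           r (Suc k) = \<mu> * r k \<and> \<epsilon> (Suc k) = \<theta> * \<epsilon> k \<and> d k = 0) \<and>
        (\<not> norm (g k) \<le> r k + \<epsilon> k \<longrightarrow>
           r (Suc k) = r k \<and> \<epsilon> (Suc k) = \<epsilon> k \<and>
           d k = - ((norm (g k) - \<epsilon> k) / norm (g k)) *\<^sub>R g k)) \<and>
     (\<forall>k\<ge>1. t k > 0) \<and>
     (\<forall>k\<ge>1. x (Suc k) = x k + t k *\<^sub>R d k)"

definition null_iters :: "(nat \<Rightarrow> 'a) \<Rightarrow> nat set" where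
  "null_iters x = {k. k \<ge> 1 \<and> x (Suc k) = x k}"

definition accumulation_point :: "(nat \<Rightarrow> 'a::metric_space) \<Rightarrow> 'a \<Rightarrow> bool" where
  "accumulation_point x xb \<longleftrightarrow> (\<exists>h. strict_mono h \<and> (\<forall>k. h k \<ge> 1) \<and> (x \<circ> h) \<longlonglongrightarrow> xb)"

text \<open>KL property at xb with desingularizing function psi(t) = M t^q.\<close>
definition KL_power :: "('a::euclidean_space \<Rightarrow> real) \<Rightarrow> ('a \<Rightarrow> 'a) \<Rightarrow> 'a \<Rightarrow> real \<Rightarrow> real \<Rightarrow> bool" where
  "KL_power f grad xb M q \<longleftrightarrow>
     (\<exists>\<eta>>0. \<exists>U. open U \<and> xb \<in> U \<and>
        (\<forall>y\<in>U. f xb < f y \<and> f y < f xb + \<eta> \<longrightarrow> norm (grad y) \<ge> M * (f y - f xb) powr q))"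

end

theory Submission
  imports Defs
begin



lemma bern_concave:
  fixes t \<alpha> :: real
  assumes "0 < \<alpha>" "\<alpha> < 1" "t > 0"
  shows "t powr \<alpha> \<le> 1 + \<alpha> * (t - 1)"
  using Youngs_inequality_0[of \<alpha> "1-\<alpha>" t 1] assms by (simp add: algebra_simps)

lemma bern_convex:
  fixes t p :: real
  assumes "p > 0" "t > 0"
  shows "1 + p * (1 - t) \<le> t powr (-p)"
proof -
  have s: "1/(1+p) + p/(1+p) = 1" using assms by (simp add: add_divide_distrib[symmetric])
  have "(t powr (-p)) powr (1/(1+p)) * t powr (p/(1+p)) \<le> (1/(1+p)) * t powr (-p) + (p/(1+p)) * t"
    by (rule Youngs_inequality_0) (use assms s in auto)
  moreover have "(t powr (-p)) powr (1/(1+p)) * t powr (p/(1+p)) = t powr (-p * (1/(1+p)) + p/(1+p))"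
    by (simp only: powr_powr powr_add)
  moreover have "-p * (1/(1+p)) + p/(1+p) = 0" by simp
  ultimately have "1 \<le> (1/(1+p)) * t powr (-p) + (p/(1+p)) * t" using assms by simp
  hence "1 * (1+p) \<le> ((1/(1+p)) * t powr (-p) + (p/(1+p)) * t) * (1+p)"
    using assms by (intro mult_right_mono) auto
  also have "\<dots> = t powr (-p) + p * t" using assms by (simp add: distrib_right)
  finally show ?thesis by (simp add: algebra_simps)
qed

lemma tele:
  fixes u :: "nat \<Rightarrow> 'a::real_normed_vector" and p :: "nat \<Rightarrow> real"
  assumes "\<And>i. n \<le> i \<Longrightarrow> i < m \<Longrightarrow> norm (u (Suc i) - u i) \<le> p i - p (Suc i)" "n \<le> m"
  shows "norm (u m - u n) \<le> p n - p m"
  using assms(2,1)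
proof (induction m rule: dec_induct)
  case base then show ?case by simp
next
  case (step m)
  have "norm (u (Suc m) - u n) \<le> norm (u m - u n) + norm (u (Suc m) - u m)"
    by (metis add.commute diff_add_cancel diff_diff_eq2 norm_triangle_ineq)
  also have "\<dots> \<le> (p n - p m) + (p m - p (Suc m))"
    using step by (intro add_mono) auto
  finally show ?case by simp
qed



lemma kl_core:
  fixes f :: "'a::euclidean_space \<Rightarrow> real" and grad :: "'a \<Rightarrow> 'a"
    and w :: "nat \<Rightarrow> 'a" and xb :: 'a and a b M q :: real
  assumes ab: "a > 0" "b > 0" and Mq: "M > 0" "0 < q" "q < 1"
    and desc: "\<And>n. f (w (Suc n)) \<le> f (w n) - a * (norm (w (Suc n) - w n))\<^sup>2"
    and gb: "\<And>n. norm (grad (w n)) \<le> b * norm (w (Suc n) - w n)"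
    and ne: "\<And>n. w (Suc n) \<noteq> w n"
    and cont: "isCont f xb"
    and clus: "\<And>N e. e > 0 \<Longrightarrow> \<exists>n\<ge>N. dist (w n) xb < e"
    and KL: "KL_power f grad xb M q"
  defines "F \<equiv> \<lambda>n. f (w n) - f xb"
  shows "\<exists>N K c. K > 0 \<and> c > 0 \<and> (\<forall>n. F n > 0) \<and> F \<longlonglongrightarrow> 0 \<and>
           (\<forall>n\<ge>N. norm (w n - xb) \<le> K * F n powr (1-q)) \<and>
           (\<forall>n\<ge>N. F (Suc n) \<le> F n - c * F n powr (2*q))"
proof -
  have mono: "F (Suc n) \<le> F n - a * (norm (w (Suc n) - w n))\<^sup>2" for n
    using desc[of n] by (simp add: F_def)
  have dec1: "F (Suc n) \<le> F n" for n
    using mono[of n] ab by (smt (verit) mult_nonneg_nonneg zero_le_power2)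
  have dec: "n \<le> m \<Longrightarrow> F m \<le> F n" for n m
    using decseq_SucI[of F, OF dec1] by (simp add: decseq_def)
  have near: "\<exists>n\<ge>N. \<bar>F n\<bar> < e" if "e > 0" for N e
  proof -
    obtain d where d: "d > 0" "\<And>y. dist y xb < d \<Longrightarrow> dist (f y) (f xb) < e"
      using cont \<open>e > 0\<close> unfolding continuous_at_eps_delta by blast
    obtain n where "n \<ge> N" "dist (w n) xb < d" using clus d(1) by blast
    thus ?thesis using d(2)[of "w n"] by (auto simp: F_def dist_real_def)
  qed
  have Fnn: "F n \<ge> 0" for n
  proof (rule ccontr)
    assume "\<not> F n \<ge> 0"
    then obtain m where "m \<ge> n" "\<bar>F m\<bar> < - F n" using near[of "- F n" n] by auto
    with dec[of n m] show False by auto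
  qed
  have Fpos: "F n > 0" for n
  proof -
    have "norm (w (Suc n) - w n) > 0" using ne[of n] by simp
    hence "a * (norm (w (Suc n) - w n))\<^sup>2 > 0" using ab by simp
    thus ?thesis using mono[of n] Fnn[of "Suc n"] by linarith
  qed
  have Flim: "F \<longlonglongrightarrow> 0"
  proof (rule metric_LIMSEQ_I)
    fix e :: real assume "e > 0"
    then obtain n0 where "\<bar>F n0\<bar> < e" using near[of e 0] by auto
    hence "\<forall>n\<ge>n0. dist (F n) 0 < e" using dec Fnn by (auto simp: dist_real_def) (smt (verit))
    thus "\<exists>no. \<forall>n\<ge>no. dist (F n) 0 < e" by blast
  qed
  obtain \<eta> U where eta: "\<eta> > 0" "open U" "xb \<in> U"
    and KLi: "\<And>y. y \<in> U \<Longrightarrow> f xb < f y \<Longrightarrow> f y < f xb + \<eta> \<Longrightarrow> norm (grad y) \<ge> M * (f y - f xb) powr q"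
    using KL unfolding KL_power_def by blast
  obtain \<rho> where rho: "\<rho> > 0" "ball xb \<rho> \<subseteq> U" using eta open_contains_ball by blast
  define K where "K = b / ((1-q) * a * M)"
  have K: "K > 0" using ab Mq by (simp add: K_def)
  define \<phi> where "\<phi> = (\<lambda>n. F n powr (1-q))"
  have phinn: "\<phi> n \<ge> 0" for n by (simp add: \<phi>_def)
  have KLn: "M * F n powr q \<le> b * norm (w (Suc n) - w n)" if "w n \<in> U" "F n < \<eta>" for n
    using KLi[of "w n"] that Fpos[of n] gb[of n] by (simp add: F_def)
  have key: "norm (w (Suc n) - w n) \<le> K * (\<phi> n - \<phi> (Suc n))" if "w n \<in> U" "F n < \<eta>" for n
  proof -
    define D where "D = norm (w (Suc n) - w n)"
    define P where "P = F n powr q"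
    have D: "D > 0" using ne[of n] by (simp add: D_def)
    have P: "P > 0" using Fpos[of n] by (simp add: P_def)
    have PD: "P \<le> b * D / M" using KLn[OF that] Mq by (simp add: P_def D_def field_simps)
    have E: "F n - F (Suc n) \<ge> a * D^2" using mono[of n] by (simp add: D_def)
    have b1: "(F (Suc n) / F n) powr (1-q) \<le> 1 + (1-q) * (F (Suc n) / F n - 1)"
      using bern_concave[of "1-q" "F (Suc n) / F n"] Mq Fpos[of n] Fpos[of "Suc n"] by simp
    hence "\<phi> (Suc n) \<le> \<phi> n * (1 + (1-q) * (F (Suc n) / F n - 1))"
      using Fpos[of n] by (simp add: \<phi>_def powr_divide divide_le_eq mult.commute)
    also have "\<phi> n * (1 + (1-q) * (F (Suc n) / F n - 1)) = \<phi> n - (1-q) * (F n - F (Suc n)) * (\<phi> n / F n)"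
      using Fpos[of n] by (simp add: field_simps)
    also have "\<phi> n / F n = 1 / P"
      using Fpos[of n] by (simp add: \<phi>_def P_def powr_diff)
    finally have "\<phi> n - \<phi> (Suc n) \<ge> (1-q) * ((F n - F (Suc n)) / P)" by simp
    moreover have "(F n - F (Suc n)) / P \<ge> a * D^2 / P"
      using E P by (simp add: divide_right_mono)
    moreover have "a * D^2 / P \<ge> a * D^2 / (b * D / M)"
      using P PD ab D Mq by (intro divide_left_mono) auto
    moreover have "a * D^2 / (b * D / M) = a * M * D / b"
      using D ab by (simp add: power2_eq_square field_simps)
    ultimately have "\<phi> n - \<phi> (Suc n) \<ge> (1-q) * (a * M * D / b)"
      using Mq by (smt (verit) mult_left_mono)
    hence "K * (\<phi> n - \<phi> (Suc n)) \<ge> K * ((1-q) * (a * M * D / b))"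
      using K by (intro mult_left_mono) auto
    also have "K * ((1-q) * (a * M * D / b)) = D"
      using ab Mq by (simp add: K_def field_simps)
    finally show ?thesis by (simp add: D_def)
  qed
  have philim: "\<phi> \<longlonglongrightarrow> 0"
    unfolding \<phi>_def using Mq Fnn by (intro tendsto_zero_powrI[OF Flim, of "\<lambda>_. 1-q" "1-q"]) auto
  have "\<forall>\<^sub>F n in sequentially. F n < \<eta>" using order_tendstoD(2)[OF Flim eta(1)] .
  moreover have "\<forall>\<^sub>F n in sequentially. \<phi> n < \<rho> / (2*K)"
    using order_tendstoD(2)[OF philim] rho K by simp
  ultimately obtain N1 where N1: "\<And>n. n \<ge> N1 \<Longrightarrow> F n < \<eta> \<and> \<phi> n < \<rho> / (2*K)"
    unfolding eventually_sequentially by (metis (no_types, lifting) eventually_conj eventually_sequentially)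
  obtain N where N: "N \<ge> N1" "dist (w N) xb < \<rho>/2" using clus[of "\<rho>/2" N1] rho by auto
  have inball: "dist (w m) xb < \<rho> \<and> norm (w m - w N) \<le> K * (\<phi> N - \<phi> m)" if "N \<le> m" for m
    using that
  proof (induction m rule: dec_induct)
    case base then show ?case using N rho by simp
  next
    case (step m)
    have "w m \<in> U" using step rho by (auto simp: dist_commute)
    moreover have "F m < \<eta>" using N1[of m] step N by simp
    ultimately have km: "norm (w (Suc m) - w m) \<le> K * (\<phi> m - \<phi> (Suc m))" by (rule key)
    have "norm (w (Suc m) - w N) \<le> norm (w m - w N) + norm (w (Suc m) - w m)"
      by (metis add.commute diff_add_cancel diff_diff_eq2 norm_triangle_ineq)
    also have "\<dots> \<le> K * (\<phi> N - \<phi> m) + K * (\<phi> m - \<phi> (Suc m))" using step km by simp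
    finally have b2: "norm (w (Suc m) - w N) \<le> K * (\<phi> N - \<phi> (Suc m))" by (simp add: algebra_simps)
    have "dist (w (Suc m)) xb \<le> dist (w N) xb + norm (w (Suc m) - w N)"
      by (metis dist_commute dist_norm dist_triangle)
    also have "\<dots> < \<rho>/2 + K * \<phi> N"
    proof -
      have "K * \<phi> (Suc m) \<ge> 0" using K phinn[of "Suc m"] by simp
      thus ?thesis using N(2) b2 by (simp add: right_diff_distrib)
    qed
    also have "K * \<phi> N < \<rho>/2" using N1[of N] N K by (simp add: field_simps)
    finally have "dist (w (Suc m)) xb < \<rho>" by simp
    with b2 show ?case by simp
  qed
  have keyN: "norm (w (Suc i) - w i) \<le> K * \<phi> i - K * \<phi> (Suc i)" if "N \<le> i" for i
  proof -
    have "w i \<in> U" using inball[OF that] rho by (auto simp: dist_commute)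
    moreover have "F i < \<eta>" using N1[of i] that N by simp
    ultimately show ?thesis using key by (simp add: right_diff_distrib)
  qed
  have bound: "norm (w n - xb) \<le> K * F n powr (1-q)" if "N \<le> n" for n
  proof (rule field_le_epsilon)
    fix e :: real assume "e > 0"
    then obtain m where m: "m \<ge> n" "dist (w m) xb < e" using clus by blast
    have "norm (w m - w n) \<le> K * \<phi> n - K * \<phi> m"
      by (rule tele) (use keyN that m in auto)
    moreover have "K * \<phi> m \<ge> 0" using K phinn[of m] by simp
    ultimately have "norm (w m - w n) \<le> K * \<phi> n" by linarith
    moreover have "norm (w n - xb) \<le> norm (w m - w n) + dist (w m) xb"
      by (metis dist_commute dist_norm dist_triangle)
    ultimately show "norm (w n - xb) \<le> K * F n powr (1-q) + e"
      using m by (simp add: \<phi>_def)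
  qed
  define c where "c = a * (M / b)^2"
  have c: "c > 0" using ab Mq by (simp add: c_def)
  have decr: "F (Suc n) \<le> F n - c * F n powr (2*q)" if "N \<le> n" for n
  proof -
    define D where "D = norm (w (Suc n) - w n)"
    have "w n \<in> U" using inball[OF that] rho by (auto simp: dist_commute)
    moreover have "F n < \<eta>" using N1[of n] that N by simp
    ultimately have "M * F n powr q \<le> b * D" using KLn by (simp add: D_def)
    hence h: "(M / b) * F n powr q \<le> D" using ab by (simp add: field_simps)
    have "((M / b) * F n powr q)^2 \<le> D^2"
      using h Mq ab by (intro power_mono) auto
    moreover have "((M / b) * F n powr q)^2 = (M/b)^2 * F n powr (2*q)"
    proof -
      have "(F n powr q)^2 = F n powr (2*q)"
        using Fpos[of n] powr_power[of "F n" q 2] by simp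
      thus ?thesis by (simp add: power_mult_distrib power_divide)
    qed
    ultimately have "c * F n powr (2*q) \<le> a * D^2"
      using ab by (simp add: c_def)
    thus ?thesis using mono[of n] by (simp add: D_def)
  qed
  show ?thesis using K c Fpos Flim bound decr by blast
qed



lemma rates:
  fixes F e :: "nat \<Rightarrow> real" and K c q :: real and N :: nat
  assumes K: "K > 0" and c: "c > 0" and q: "0 < q" "q < 1"
    and Fpos: "\<And>n. F n > 0" and Flim: "F \<longlonglongrightarrow> 0"
    and bound: "\<And>n. N \<le> n \<Longrightarrow> e n \<le> K * F n powr (1-q)"
    and decr: "\<And>n. N \<le> n \<Longrightarrow> F (Suc n) \<le> F n - c * F n powr (2*q)"
  shows "(q \<le> 1/2 \<longrightarrow> (\<exists>C>0. \<exists>lam. 0 < lam \<and> lam < 1 \<and>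
              (\<forall>\<^sub>F k in sequentially. e (k - 1) \<le> C * lam ^ k)))
       \<and> (1/2 < q \<longrightarrow> (\<exists>\<rho>>0.
              (\<forall>\<^sub>F k in sequentially. e (k - 1) \<le> \<rho> * real k powr (- ((1 - q) / (2 * q - 1))))))"
proof (intro conjI impI)
  assume qh: "q \<le> 1/2"
  have "\<forall>\<^sub>F n in sequentially. F n < 1" using order_tendstoD(2)[OF Flim] by simp
  moreover have "\<forall>\<^sub>F n in sequentially. N \<le> n" by (rule eventually_ge_at_top)
  ultimately obtain N2 where N2: "\<And>n. n \<ge> N2 \<Longrightarrow> F n < 1 \<and> N \<le> n"
    unfolding eventually_sequentially by (metis (no_types, lifting) eventually_conj eventually_sequentially)
  define \<beta> where "\<beta> = 1 - c"
  have step: "F (Suc n) \<le> \<beta> * F n" if "N2 \<le> n" for n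
  proof -
    have "F n powr 1 \<le> F n powr (2*q)"
      using N2[OF that] Fpos[of n] qh by (intro powr_mono') auto
    hence "F n \<le> F n powr (2*q)" using Fpos[of n] by simp
    hence "c * F n \<le> c * F n powr (2*q)" using c by simp
    thus ?thesis using decr[of n] N2[OF that] by (simp add: \<beta>_def algebra_simps)
  qed
  have bpos: "\<beta> > 0"
  proof -
    have "0 < F (Suc N2)" by (rule Fpos)
    also have "\<dots> \<le> \<beta> * F N2" using step by simp
    finally show ?thesis using Fpos[of N2] by (simp add: zero_less_mult_iff)
  qed
  have b1: "\<beta> < 1" using c by (simp add: \<beta>_def)
  have geo: "F (N2 + j) \<le> F N2 * \<beta> ^ j" for j
  proof (induction j)
    case 0 then show ?case by simp
  next
    case (Suc j)
    have "F (N2 + Suc j) \<le> \<beta> * F (N2 + j)" using step[of "N2 + j"] by simp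
    also have "\<dots> \<le> \<beta> * (F N2 * \<beta> ^ j)" using Suc bpos by (intro mult_left_mono) auto
    finally show ?case by (simp add: algebra_simps)
  qed
  define lam where "lam = \<beta> powr (1-q)"
  have lam: "0 < lam" "lam < 1" using bpos b1 q powr01_less_one[of \<beta> "1-q"] by (auto simp: lam_def)
  define C0 where "C0 = K * F N2 powr (1-q)"
  define C where "C = C0 / lam ^ Suc N2"
  have C: "C > 0" using K Fpos[of N2] lam by (simp add: C_def C0_def)
  have "\<forall>\<^sub>F k in sequentially. e (k - 1) \<le> C * lam ^ k"
    unfolding eventually_sequentially
  proof (intro exI allI impI)
    fix k assume k: "Suc N2 \<le> k"
    define j where "j = k - 1 - N2"
    have kj: "k - 1 = N2 + j" "k = j + Suc N2" using k by (auto simp: j_def)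
    have "e (k - 1) \<le> K * F (N2 + j) powr (1-q)" using bound[of "N2 + j"] N2[of N2] kj(1) by simp
    also have "\<dots> \<le> K * (F N2 * \<beta> ^ j) powr (1-q)"
      using geo[of j] Fpos[of "N2 + j"] q K by (intro mult_left_mono powr_mono2) auto
    also have "(F N2 * \<beta> ^ j) powr (1-q) = F N2 powr (1-q) * lam ^ j"
    proof -
      have "(\<beta> ^ j) powr (1-q) = (\<beta> powr real j) powr (1-q)" using bpos by (simp add: powr_realpow)
      also have "\<dots> = lam ^ j" using bpos by (simp add: lam_def powr_powr powr_power mult.commute)
      finally show ?thesis using Fpos[of N2] bpos by (simp add: powr_mult)
    qed
    also have "K * (F N2 powr (1-q) * lam ^ j) = C * lam ^ k"
      using lam by (simp add: C_def C0_def kj(2) power_add field_simps)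
    finally show "e (k - 1) \<le> C * lam ^ k" .
  qed
  thus "\<exists>C>0. \<exists>lam. 0 < lam \<and> lam < 1 \<and> (\<forall>\<^sub>F k in sequentially. e (k - 1) \<le> C * lam ^ k)"
    using C lam by blast
next
  assume qh: "1/2 < q"
  define p where "p = 2*q - 1"
  have p: "p > 0" using qh by (simp add: p_def)
  define G where "G = (\<lambda>n. F n powr (-p))"
  have Gstep: "G (Suc n) \<ge> G n + p * c" if "N \<le> n" for n
  proof -
    define t where "t = F (Suc n) / F n"
    have t: "t > 0" using Fpos[of n] Fpos[of "Suc n"] by (simp add: t_def)
    have Fs: "F (Suc n) = t * F n" using Fpos[of n] by (simp add: t_def)
    have "G (Suc n) = t powr (-p) * G n" using t Fpos[of n] by (simp add: G_def Fs powr_mult)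
    also have "\<dots> \<ge> (1 + p * (1 - t)) * G n"
      using bern_convex[OF p t] by (intro mult_right_mono) (auto simp: G_def)
    finally have g1: "G (Suc n) \<ge> G n + p * ((1 - t) * G n)" by (simp add: algebra_simps)
    have "(1 - t) * G n = (F n - F (Suc n)) * (F n powr (-p) / F n)"
      using Fpos[of n] by (simp add: t_def G_def field_simps)
    also have "\<dots> \<ge> (c * F n powr (2*q)) * (F n powr (-p) / F n)"
      using decr[OF that] Fpos[of n] by (intro mult_right_mono) auto
    also have "(c * F n powr (2*q)) * (F n powr (-p) / F n) = c"
    proof -
      have "F n powr (2*q) * F n powr (-p) = F n powr 1" by (simp add: p_def flip: powr_add)
      thus ?thesis using Fpos[of n] by (simp add: mult.assoc)
    qed
    finally have "(1 - t) * G n \<ge> c" .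
    thus ?thesis using g1 p by (smt (verit) mult_left_mono)
  qed
  have Glin: "G (N + j) \<ge> p * c * j" for j
  proof (induction j)
    case 0 then show ?case by (simp add: G_def)
  next
    case (Suc j)
    have "G (N + Suc j) \<ge> G (N + j) + p * c" using Gstep[of "N + j"] by simp
    thus ?case using Suc by (simp add: algebra_simps)
  qed
  define s where "s = (1 - q) / (2*q - 1)"
  have s: "s > 0" using q qh by (simp add: s_def)
  define \<rho> where "\<rho> = K * (p * c / 2) powr (-s)"
  have rho: "\<rho> > 0" using K p c by (simp add: \<rho>_def)
  have "\<forall>\<^sub>F k in sequentially. e (k - 1) \<le> \<rho> * real k powr (- ((1 - q) / (2 * q - 1)))"
    unfolding eventually_sequentially
  proof (intro exI allI impI)
    fix k assume k: "2 * N + 2 \<le> k"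
    define j where "j = k - 1 - N"
    have kj: "k - 1 = N + j" using k by (simp add: j_def)
    have jk: "real j \<ge> real k / 2" using k by (simp add: j_def)
    have kpos: "real k > 0" using k by simp
    have Gpos: "p * c / 2 * real k \<le> G (N + j)"
    proof -
      have "p * c / 2 * real k \<le> p * c * real j" using jk p c by (simp add: field_simps)
      thus ?thesis using Glin[of j] by linarith
    qed
    have "e (k - 1) \<le> K * F (N + j) powr (1-q)" using bound[of "N + j"] kj by simp
    also have "F (N + j) powr (1-q) = G (N + j) powr (-s)"
    proof -
      have "-p * -s = 1 - q" using p by (simp add: s_def p_def field_simps)
      thus ?thesis by (simp add: G_def powr_powr)
    qed
    also have "G (N + j) powr (-s) \<le> (p * c / 2 * real k) powr (-s)"
      using Gpos s p c kpos by (intro powr_mono2') auto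
    also have "(p * c / 2 * real k) powr (-s) = (p * c / 2) powr (-s) * real k powr (-s)"
      using p c kpos by (intro powr_mult)
    finally show "e (k - 1) \<le> \<rho> * real k powr (- ((1 - q) / (2 * q - 1)))"
      using K by (simp add: \<rho>_def s_def mult_left_mono algebra_simps)
  qed
  thus "\<exists>\<rho>>0. \<forall>\<^sub>F k in sequentially. e (k - 1) \<le> \<rho> * real k powr (- ((1 - q) / (2 * q - 1)))"
    using rho by blast
qed



lemma irg_step:
  fixes f :: "'a::euclidean_space \<Rightarrow> real" and grad :: "'a \<Rightarrow> 'a" and xk g :: 'a
  assumes L: "L > 0" "L_descent f grad L"
    and gerr: "norm (g - grad xk) \<le> \<epsilon>" and ep: "\<epsilon> > 0" "r > 0" "\<epsilon> * r1 \<le> \<epsilon>1 * r" "r1 > 0" "\<epsilon>1 > 0"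
    and big: "norm g > r + \<epsilon>"
    and dd: "d = - ((norm g - \<epsilon>) / norm g) *\<^sub>R g"
    and st: "0 < \<delta>" "\<delta> < 2" "0 < \<delta>'" "\<delta>' \<le> t" "t \<le> (2 - \<delta>) / L"
  shows "f (xk + t *\<^sub>R d) \<le> f xk - (\<delta> * L / (2 * (2 - \<delta>))) * (norm (t *\<^sub>R d))\<^sup>2"
    and "norm (grad xk) \<le> ((1 + 2 * (\<epsilon>1 / r1)) / \<delta>') * norm (t *\<^sub>R d)"
proof -
  have gpos: "norm g > 0" using big ep by linarith
  have nd: "norm d = norm g - \<epsilon>"
    using gpos big ep by (simp add: dd)
  have gd: "g \<bullet> d = - ((norm g - \<epsilon>) * norm g)"
    using gpos by (simp add: dd inner_commute power2_eq_square flip: power2_norm_eq_inner)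
  have "(grad xk - g) \<bullet> d \<le> norm (grad xk - g) * norm d" by (rule norm_cauchy_schwarz)
  also have "\<dots> \<le> \<epsilon> * norm d" using gerr by (intro mult_right_mono) (auto simp: norm_minus_commute)
  finally have e1: "(grad xk - g) \<bullet> d \<le> \<epsilon> * norm d" .
  have "grad xk \<bullet> d = g \<bullet> d + (grad xk - g) \<bullet> d" by (simp add: inner_diff_left)
  also have "\<dots> \<le> - ((norm g - \<epsilon>) * norm g) + \<epsilon> * (norm g - \<epsilon>)" using gd e1 nd by simp
  also have "\<dots> = - (norm d)\<^sup>2" unfolding nd by (simp add: power2_eq_square algebra_simps)
  finally have gdd: "grad xk \<bullet> d \<le> - (norm d)\<^sup>2" .
  have t: "t > 0" using st by linarith
  have "f (xk + t *\<^sub>R d) \<le> f xk + grad xk \<bullet> ((xk + t *\<^sub>R d) - xk) + L / 2 * (norm ((xk + t *\<^sub>R d) - xk))\<^sup>2"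
    using L(2) unfolding L_descent_def by blast
  also have "\<dots> = f xk + t * (grad xk \<bullet> d) + L / 2 * (t\<^sup>2 * (norm d)\<^sup>2)"
    using t by (simp add: power_mult_distrib)
  also have "\<dots> \<le> f xk - t * (norm d)\<^sup>2 + L / 2 * (t\<^sup>2 * (norm d)\<^sup>2)"
  proof -
    have "t * (grad xk \<bullet> d) \<le> t * (- (norm d)\<^sup>2)" using gdd t by (intro mult_left_mono) auto
    thus ?thesis by simp
  qed
  finally have f1: "f (xk + t *\<^sub>R d) \<le> f xk - t * (norm d)\<^sup>2 + L / 2 * (t\<^sup>2 * (norm d)\<^sup>2)" .
  define a where "a = \<delta> * L / (2 * (2 - \<delta>))"
  have "t * L \<le> 2 - \<delta>" using st L by (simp add: field_simps)
  hence tl: "t * (L / (2 - \<delta>)) \<le> 1" using st by (simp add: field_simps)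
  have "L / 2 + a = L / (2 - \<delta>)" using st by (simp add: a_def field_simps)
  hence "t * (L/2 + a) \<le> 1" using tl by simp
  hence "(t * (norm d)\<^sup>2) * (t * (L/2 + a)) \<le> (t * (norm d)\<^sup>2) * 1"
    using t by (intro mult_left_mono) auto
  hence "t\<^sup>2 * (norm d)\<^sup>2 * (L/2) + a * (t\<^sup>2 * (norm d)\<^sup>2) \<le> t * (norm d)\<^sup>2"
    by (simp add: power2_eq_square algebra_simps)
  moreover have "(norm (t *\<^sub>R d))\<^sup>2 = t\<^sup>2 * (norm d)\<^sup>2" using t by (simp add: power_mult_distrib)
  ultimately show "f (xk + t *\<^sub>R d) \<le> f xk - (\<delta> * L / (2 * (2 - \<delta>))) * (norm (t *\<^sub>R d))\<^sup>2"
    using f1 by (simp add: a_def algebra_simps)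
  define cc where "cc = \<epsilon>1 / r1"
  have "\<epsilon> \<le> cc * r" using ep by (simp add: cc_def field_simps)
  also have "\<dots> \<le> cc * norm d" using nd big ep by (intro mult_left_mono) (auto simp: cc_def)
  finally have ec: "\<epsilon> \<le> cc * norm d" .
  have "norm (grad xk) \<le> norm g + norm (grad xk - g)" by (metis norm_triangle_sub)
  also have "\<dots> \<le> norm g + \<epsilon>" using gerr by (simp add: norm_minus_commute)
  also have "\<dots> = norm d + 2 * \<epsilon>" using nd by simp
  also have "\<dots> \<le> (1 + 2 * cc) * norm d" using ec by (simp add: algebra_simps)
  finally have g1: "norm (grad xk) \<le> (1 + 2 * cc) * norm d" .
  have "\<delta>' * norm d \<le> t * norm d" using st by (intro mult_right_mono) auto
  hence "norm d \<le> norm (t *\<^sub>R d) / \<delta>'" using st t by (simp add: field_simps)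
  hence "(1 + 2 * cc) * norm d \<le> (1 + 2 * cc) * (norm (t *\<^sub>R d) / \<delta>')"
    using ep by (intro mult_left_mono) (auto simp: cc_def)
  with g1 show "norm (grad xk) \<le> ((1 + 2 * (\<epsilon>1 / r1)) / \<delta>') * norm (t *\<^sub>R d)"
    by (simp add: cc_def)
qed




theorem mainTheorem17:
  fixes f :: "'a::euclidean_space \<Rightarrow> real" and grad :: "'a \<Rightarrow> 'a"
    and x g d :: "nat \<Rightarrow> 'a" and \<epsilon> r t :: "nat \<Rightarrow> real"
    and L \<mu> \<theta> M q :: real and xb :: 'a
  assumes C1: "is_C1_with_gradient f grad"
    and L: "L > 0" "L_descent f grad L"
    and alg: "IRG f grad \<mu> \<theta> \<epsilon> x g d \<epsilon> r t"
    and thmu: "\<theta> < \<mu>"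
    and step: "\<exists>\<delta> \<delta>'. 0 < \<delta> \<and> \<delta> < 2 \<and> 0 < \<delta>' \<and> \<delta>' \<le> (2 - \<delta>) / L \<and>
                 (\<forall>k\<ge>1. \<delta>' \<le> t k \<and> t k \<le> (2 - \<delta>) / L)"
    and acc: "accumulation_point x xb"
    and KL: "M > 0" "0 < q" "q < 1" "KL_power f grad xb M q"
    and inf: "infinite ({k. k \<ge> 1} - null_iters x)"
  defines "z \<equiv> (\<lambda>k. x (enumerate ({k. k \<ge> 1} - null_iters x) (k - 1)))"
  shows "(q \<le> 1/2 \<longrightarrow> (\<exists>C>0. \<exists>lam. 0 < lam \<and> lam < 1 \<and>
              (\<forall>\<^sub>F k in sequentially. norm (z k - xb) \<le> C * lam ^ k)))
       \<and> (1/2 < q \<longrightarrow> (\<exists>\<rho>>0.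
              (\<forall>\<^sub>F k in sequentially. norm (z k - xb) \<le> \<rho> * real k powr (- ((1 - q) / (2 * q - 1))))))"
proof -
  define S where "S = {k::nat. k \<ge> 1} - null_iters x"
  define e where "e = enumerate S"
  define w where "w = (\<lambda>n. x (e n))"
  have infS: "infinite S" using inf by (simp add: S_def)
  obtain \<delta> \<delta>' where st: "0 < \<delta>" "\<delta> < 2" "0 < \<delta>'" "\<delta>' \<le> (2 - \<delta>) / L"
      "\<And>k. k \<ge> 1 \<Longrightarrow> \<delta>' \<le> t k \<and> t k \<le> (2 - \<delta>) / L"
    using step by blast
  have A0: "\<epsilon> 1 > 0" "r 1 > 0" "0 < \<mu>" "\<mu> < 1" "0 < \<theta>" "\<theta> < 1"
    using alg unfolding IRG_def by auto
  have Aerr: "\<And>k. k \<ge> 1 \<Longrightarrow> norm (g k - grad (x k)) \<le> \<epsilon> k"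
    using alg unfolding IRG_def by auto
  have Acase: "\<And>k. k \<ge> 1 \<Longrightarrow>
        (norm (g k) \<le> r k + \<epsilon> k \<longrightarrow>
           r (Suc k) = \<mu> * r k \<and> \<epsilon> (Suc k) = \<theta> * \<epsilon> k \<and> d k = 0) \<and>
        (\<not> norm (g k) \<le> r k + \<epsilon> k \<longrightarrow>
           r (Suc k) = r k \<and> \<epsilon> (Suc k) = \<epsilon> k \<and>
           d k = - ((norm (g k) - \<epsilon> k) / norm (g k)) *\<^sub>R g k)"
    using alg unfolding IRG_def by auto
  have Ax: "\<And>k. k \<ge> 1 \<Longrightarrow> x (Suc k) = x k + t k *\<^sub>R d k"
    using alg unfolding IRG_def by auto
  have pos: "\<epsilon> k > 0 \<and> r k > 0 \<and> \<epsilon> k * r 1 \<le> \<epsilon> 1 * r k" if "1 \<le> k" for k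
    using that
  proof (induction k rule: dec_induct)
    case base then show ?case using A0 by simp
  next
    case (step k)
    show ?case
    proof (cases "norm (g k) \<le> r k + \<epsilon> k")
      case True
      hence eq: "r (Suc k) = \<mu> * r k" "\<epsilon> (Suc k) = \<theta> * \<epsilon> k" using Acase[of k] step by auto
      have "\<theta> * (\<epsilon> k * r 1) \<le> \<theta> * (\<epsilon> 1 * r k)" using step A0 by (intro mult_left_mono) auto
      also have "\<dots> \<le> \<mu> * (\<epsilon> 1 * r k)" using thmu step A0 by (intro mult_right_mono) auto
      finally show ?thesis using eq step A0 by (simp add: algebra_simps)
    next
      case False
      thus ?thesis using Acase[of k] step by auto
    qed
  qed
  have eS: "e n \<in> S" for n using enumerate_in_set[OF infS] by (simp add: e_def)
  have e1: "e n \<ge> 1" and enn: "x (Suc (e n)) \<noteq> x (e n)" for n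
    using eS[of n] by (auto simp: S_def null_iters_def)
  have emono: "e m < e n \<longleftrightarrow> m < n" for m n using infS by (simp add: e_def)
  have between: "x (Suc (e n) + i) = x (Suc (e n))" if "Suc (e n) + i \<le> e (Suc n)" for n i
    using that
  proof (induction i)
    case 0 then show ?case by simp
  next
    case (Suc i)
    define j where "j = Suc (e n) + i"
    have j1: "j \<ge> 1" by (simp add: j_def)
    have "j \<notin> S"
    proof
      assume "j \<in> S"
      then obtain m where "e m = j" using enumerate_Ex[OF infS] by (auto simp: e_def)
      moreover have "e n < j" "j < e (Suc n)" using Suc.prems by (auto simp: j_def)
      ultimately show False using emono[of n m] emono[of m "Suc n"] by simp
    qed
    hence "x (Suc j) = x j" using j1 by (simp add: S_def null_iters_def)
    thus ?case using Suc by (simp add: j_def)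
  qed
  have wstep: "w (Suc n) = x (Suc (e n))" for n
  proof -
    have "Suc (e n) \<le> e (Suc n)" using emono[of n "Suc n"] by simp
    then obtain i where "e (Suc n) = Suc (e n) + i" by (metis le_Suc_ex)
    thus ?thesis using between[of n i] by (simp add: w_def)
  qed
  define a where "a = \<delta> * L / (2 * (2 - \<delta>))"
  define b where "b = (1 + 2 * (\<epsilon> 1 / r 1)) / \<delta>'"
  have q0: "\<epsilon> 1 / r 1 > 0" using A0 by simp
  have q1: "1 + 2 * (\<epsilon> 1 / r 1) > 0" using q0 by linarith
  have ab1: "a > 0" using st L by (simp add: a_def)
  have ab2: "b > 0" unfolding b_def by (rule divide_pos_pos[OF q1 st(3)])
  note ab = ab1 ab2
  have facts: "f (w (Suc n)) \<le> f (w n) - a * (norm (w (Suc n) - w n))\<^sup>2 \<and>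
        norm (grad (w n)) \<le> b * norm (w (Suc n) - w n)" for n
  proof -
    define k where "k = e n"
    have k1: "k \<ge> 1" unfolding k_def by (rule e1)
    have big: "\<not> norm (g k) \<le> r k + \<epsilon> k"
    proof
      assume "norm (g k) \<le> r k + \<epsilon> k"
      hence "d k = 0" using Acase[OF k1] by auto
      hence "x (Suc k) = x k" using Ax[OF k1] by simp
      thus False using enn[of n] by (simp add: k_def)
    qed
    have dk: "d k = - ((norm (g k) - \<epsilon> k) / norm (g k)) *\<^sub>R g k" using Acase[OF k1] big by auto
    have ws: "w (Suc n) = x k + t k *\<^sub>R d k" using wstep[of n] Ax[OF k1] by (simp add: k_def)
    have wn: "w n = x k" by (simp add: w_def k_def)
    have P: "f (x k + t k *\<^sub>R d k) \<le> f (x k) - a * (norm (t k *\<^sub>R d k))\<^sup>2 \<and>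
          norm (grad (x k)) \<le> b * norm (t k *\<^sub>R d k)"
      using irg_step[OF L Aerr[OF k1], of "r k" "r 1" "\<epsilon> 1" "d k" \<delta> \<delta>' "t k"]
        pos[OF k1] A0 big dk st st(5)[OF k1] by (simp add: a_def b_def not_le)
    thus ?thesis using ws wn by simp
  qed
  have ne: "w (Suc n) \<noteq> w n" for n using enn[of n] wstep[of n] by (simp add: w_def)
  have cont: "isCont f xb"
    using C1 unfolding is_C1_with_gradient_def by (metis has_derivative_continuous)
  have clus: "\<exists>n\<ge>N. dist (w n) xb < ee" if "ee > 0" for N ee
  proof -
    obtain h where h: "strict_mono h" "(x \<circ> h) \<longlonglongrightarrow> xb"
      using acc unfolding accumulation_point_def by blast
    have "\<forall>\<^sub>F k in sequentially. dist ((x \<circ> h) k) xb < ee" using h(2) that by (rule tendstoD)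
    moreover have "\<forall>\<^sub>F k in sequentially. Suc (e N) \<le> k" by (rule eventually_ge_at_top)
    ultimately obtain k where k: "dist (x (h k)) xb < ee" "Suc (e N) \<le> k"
      by (metis (no_types, lifting) comp_apply eventually_conj_iff eventually_sequentially order.refl)
    define j where "j = h k"
    have jbig: "e N < j" using k(2) seq_suble[OF h(1), of k] by (simp add: j_def)
    have ex: "\<exists>i. j \<le> e i"
    proof -
      have "j \<le> e j" using infS le_enumerate by (simp add: e_def)
      thus ?thesis by blast
    qed
    define i0 where "i0 = (LEAST i. j \<le> e i)"
    have i0: "j \<le> e i0" using LeastI_ex[OF ex] by (simp add: i0_def)
    have "i0 \<noteq> 0"
    proof
      assume "i0 = 0"
      hence "j \<le> e 0" using i0 by simp
      moreover have "e 0 \<le> e N" using emono[of 0 N] by (cases N) auto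
      ultimately show False using jbig by simp
    qed
    then obtain m where m: "i0 = Suc m" by (metis not0_implies_Suc)
    have "\<not> j \<le> e m" using not_less_Least[of m "\<lambda>i. j \<le> e i"] m by (simp add: i0_def)
    hence jm: "e m < j" "j \<le> e (Suc m)" using i0 m by auto
    obtain i where "j = Suc (e m) + i" using jm(1) by (metis Suc_leI le_Suc_ex)
    hence "x j = x (Suc (e m))" using between[of m i] jm(2) by simp
    hence xj: "x j = w (Suc m)" by (simp add: wstep)
    have "N \<le> Suc m"
    proof (rule ccontr)
      assume "\<not> N \<le> Suc m"
      hence "e (Suc m) < e N" using emono by simp
      thus False using jm(2) jbig by simp
    qed
    thus ?thesis using xj k(1) by (auto simp: j_def)
  qed
  obtain N K c where core: "K > 0" "c > 0" "\<forall>n. (\<lambda>n. f (w n) - f xb) n > 0"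
      "(\<lambda>n. f (w n) - f xb) \<longlonglongrightarrow> 0"
      "\<forall>n\<ge>N. norm (w n - xb) \<le> K * (\<lambda>n. f (w n) - f xb) n powr (1-q)"
      "\<forall>n\<ge>N. (\<lambda>n. f (w n) - f xb) (Suc n) \<le> (\<lambda>n. f (w n) - f xb) n - c * (\<lambda>n. f (w n) - f xb) n powr (2*q)"
    using kl_core[of a b M q f w grad xb, OF ab KL(1,2,3)] facts ne cont clus KL(4) by blast
  have R: "(q \<le> 1/2 \<longrightarrow> (\<exists>C>0. \<exists>lam. 0 < lam \<and> lam < 1 \<and>
              (\<forall>\<^sub>F k in sequentially. (\<lambda>n. norm (w n - xb)) (k - 1) \<le> C * lam ^ k)))
       \<and> (1/2 < q \<longrightarrow> (\<exists>\<rho>>0.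
              (\<forall>\<^sub>F k in sequentially. (\<lambda>n. norm (w n - xb)) (k - 1) \<le> \<rho> * real k powr (- ((1 - q) / (2 * q - 1))))))"
    by (rule rates[OF core(1,2) KL(2,3), of "\<lambda>n. f (w n) - f xb" N]) (use core in auto)
  have zw: "z = (\<lambda>k. w (k - 1))" by (simp add: z_def w_def e_def S_def)
  show ?thesis using R unfolding zw by simp
qed


end
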